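(* For every closed $\varphi\in\mathrm{sHML}_F$, the monitor $\mathrm{m}(\varphi)$ is sound and violation-complete for $\varphi$ over finfinite traces. For every closed $\varphi\in\mathrm{cHML}_F$, $\mathrm{m}(\varphi)$ is sound and satisfaction-complete for $\varphi$ over finfinite traces.
   Context: Fix a finite set $\mathrm{Act}$ of actions, $\tau\notin\mathrm{Act}$. recHML formulae: $\varphi::=\mathrm{tt}\mid\mathrm{ff}\mid\varphi\vee\varphi\mid\varphi\wedge\varphi\mid\langle A\rangle\varphi\mid[A]\varphi\mid\min X.\varphi\mid\max X.\varphi\mid X$ ($A\subseteq\mathrm{Act}$), guarded. Fragments: $\mathrm{sHML}_F$: $\varphi::=\mathrm{tt}\mid\mathrm{ff}\mid[A]\varphi\mid\varphi\vee\varphi\mid\varphi\wedge\varphi\mid\max X.\varphi\mid X$; $\mathrm{cHML}_F$: $\varphi::=\mathrm{tt}\mid\mathrm{ff}\mid\langle A\rangle\varphi\mid\varphi\vee\varphi\mid\varphi\wedge\varphi\mid\min X.\varphi\mid X$. Finfinite traces $\mathrm{Fin}=\mathrm{Act}^\omega\cup\mathrm{Act}^*$; finfinite semantics: $[\![\mathrm{tt}]\!]_F=\mathrm{Fin}$, $[\![\mathrm{ff}]\!]_F=\emptyset$, $\vee,\wedge$ union/intersection, $[\![\langle A\rangle\varphi,\sigma]\!]_F=\{ag\mid a\in A,g\in[\![\varphi,\sigma]\!]_F\}$, $[\![[A]\varphi,\sigma]\!]_F=\{g\mid\forall a\in A,\forall g'.\ g=ag'\Rightarrow g'\in[\![\varphi,\sigma]\!]_F\}$,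 $\min/\max$ as least/greatest fixpoints (intersection of pre-fixpoints / union of post-fixpoints), $[\![X,\sigma]\!]_F=\sigma(X)$. Monitors: $m,n::=v\mid a.m\mid m+n\mid\mathrm{rec}\,x.m\mid x\mid m\otimes n\mid m\oplus n$, verdicts $v::=\mathrm{end}\mid\mathrm{no}\mid\mathrm{yes}$, with transitions ($\mu\in\mathrm{Act}\cup\{\tau\}$, $a\in\mathrm{Act}$, $\odot\in\{\otimes,\oplus\}$): $a.m\xrightarrow{a}m$; $\mathrm{rec}\,x.m\xrightarrow{\tau}m[\mathrm{rec}\,x.m/x]$; if $m\xrightarrow{\mu}m'$ then $m+n\xrightarrow{\mu}m'$ and $n+m\xrightarrow{\mu}m'$; $v\xrightarrow{a}v$; if $m\xrightarrow{a}m'$ and $n\xrightarrow{a}n'$ then $m\odot n\xrightarrow{a}m'\odot n'$; if $m\xrightarrow{\tau}m'$ then $m\odot n\xrightarrow{\tau}m'\odot n$ and $n\odot m\xrightarrow{\tau}n\odot m'$; $\mathrm{end}\odot\mathrm{end}\xrightarrow{\tau}\mathrm{end}$; $\mathrm{yes}\otimes m\xrightarrow{\tau}m$, $\mathrm{no}\otimes m\xrightarrow{\tau}\mathrm{no}$, $\mathrm{no}\oplus m\xrightarrow{\tau}m$, $\mathrm{yes}\oplus m\xrightarrow{\tau}\mathrm{yes}$ and their symmetric versions. Weak transitions $\Rightarrow,\overset{a}{\Longrightarrow},\overset{s}{\Longrightarrow}$ as usual. $m$ rejects (accepts) $s\in\mathrm{Act}^*$ if $m\overset{s}{\Longrightarrow}\mathrm{no}$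 ($\mathrm{yes}$), and rejects (accepts) $g\in\mathrm{Fin}$ if it rejects (accepts) some finite prefix of $g$. Soundness over finfinite traces: $m$ rejects $g$ implies $g\notin[\![\varphi]\!]_F$, and $m$ accepts $g$ implies $g\in[\![\varphi]\!]_F$, for all $g\in\mathrm{Fin}$; violation-complete: $g\notin[\![\varphi]\!]_F$ implies $m$ rejects $g$; satisfaction-complete: $g\in[\![\varphi]\!]_F$ implies $m$ accepts $g$. Monitor synthesis (writing $A.n$ for $\sum_{a\in A}a.n$, $\overline{A}=\mathrm{Act}\setminus A$, and omitting a summand whose action set is empty): $\mathrm{m}(\mathrm{tt})=\mathrm{yes}$, $\mathrm{m}(\mathrm{ff})=\mathrm{no}$, $\mathrm{m}(X)=x$, $\mathrm{m}(\varphi\wedge\psi)=\mathrm{m}(\varphi)\otimes\mathrm{m}(\psi)$, $\mathrm{m}(\varphi\vee\psi)=\mathrm{m}(\varphi)\oplus\mathrm{m}(\psi)$, $\mathrm{m}([A]\varphi)=A.\mathrm{m}(\varphi)+\overline{A}.\mathrm{yes}$, $\mathrm{m}(\langle A\rangle\varphi)=A.\mathrm{m}(\varphi)+\overline{A}.\mathrm{no}$, $\mathrm{m}(\max X.\varphi)=\mathrm{m}(\min X.\varphi)=\mathrm{rec}\,x.\mathrm{m}(\varphi)$. *)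

theory Defs
  imports Main
begin

(* Actions: a finite type 'a (Act = UNIV).  Fixpoint / recursion variables: nat. *)

datatype 'a fml =
    TT | FF
  | Or "'a fml" "'a fml" | And "'a fml" "'a fml"
  | Dia "'a set" "'a fml" | Box "'a set" "'a fml"
  | MinF nat "'a fml" | MaxF nat "'a fml" | Var nat

datatype 'a ftrace = FinT "'a list" | InfT "nat \<Rightarrow> 'a"

fun tcons :: "'a \<Rightarrow> 'a ftrace \<Rightarrow> 'a ftrace" where
  "tcons a (FinT l) = FinT (a # l)"
| "tcons a (InfT f) = InfT (case_nat a f)"

fun is_prefix :: "'a list \<Rightarrow> 'a ftrace \<Rightarrow> bool" where
  "is_prefix s (FinT l) = (s = take (length s) l \<and> length s \<le> length l)"
| "is_prefix s (InfT f) = (s = map f [0..<length s])"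

primrec sem :: "'a fml \<Rightarrow> (nat \<Rightarrow> 'a ftrace set) \<Rightarrow> 'a ftrace set" where
  "sem TT \<sigma> = UNIV"
| "sem FF \<sigma> = {}"
| "sem (Or \<phi> \<psi>) \<sigma> = sem \<phi> \<sigma> \<union> sem \<psi> \<sigma>"
| "sem (And \<phi> \<psi>) \<sigma> = sem \<phi> \<sigma> \<inter> sem \<psi> \<sigma>"
| "sem (Dia A \<phi>) \<sigma> = {tcons a g | a g. a \<in> A \<and> g \<in> sem \<phi> \<sigma>}"
| "sem (Box A \<phi>) \<sigma> = {g. \<forall>a\<in>A. \<forall>g'. g = tcons a g' \<longrightarrow> g' \<in> sem \<phi> \<sigma>}"
| "sem (MinF X \<phi>) \<sigma> = \<Inter>{S. sem \<phi> (\<sigma>(X := S)) \<subseteq> S}"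
| "sem (MaxF X \<phi>) \<sigma> = \<Union>{S. S \<subseteq> sem \<phi> (\<sigma>(X := S))}"
| "sem (Var X) \<sigma> = \<sigma> X"

(* semantics of closed formulae (environment irrelevant) *)
definition semF :: "'a fml \<Rightarrow> 'a ftrace set" where
  "semF \<phi> = sem \<phi> (\<lambda>_. {})"

primrec fv :: "'a fml \<Rightarrow> nat set" where
  "fv TT = {}" | "fv FF = {}"
| "fv (Or \<phi> \<psi>) = fv \<phi> \<union> fv \<psi>" | "fv (And \<phi> \<psi>) = fv \<phi> \<union> fv \<psi>"
| "fv (Dia A \<phi>) = fv \<phi>" | "fv (Box A \<phi>) = fv \<phi>"
| "fv (MinF X \<phi>) = fv \<phi> - {X}" | "fv (MaxF X \<phi>) = fv \<phi> - {X}"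
| "fv (Var X) = {X}"

definition closed :: "'a fml \<Rightarrow> bool" where
  "closed \<phi> \<longleftrightarrow> fv \<phi> = {}"

primrec unguarded :: "nat \<Rightarrow> 'a fml \<Rightarrow> bool" where
  "unguarded X TT = False" | "unguarded X FF = False"
| "unguarded X (Or \<phi> \<psi>) = (unguarded X \<phi> \<or> unguarded X \<psi>)"
| "unguarded X (And \<phi> \<psi>) = (unguarded X \<phi> \<or> unguarded X \<psi>)"
| "unguarded X (Dia A \<phi>) = False" | "unguarded X (Box A \<phi>) = False"
| "unguarded X (MinF Y \<phi>) = (X \<noteq> Y \<and> unguarded X \<phi>)"
| "unguarded X (MaxF Y \<phi>) = (X \<noteq> Y \<and> unguarded X \<phi>)"
| "unguarded X (Var Y) = (X = Y)"

primrec guarded :: "'a fml \<Rightarrow> bool" where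
  "guarded TT = True" | "guarded FF = True"
| "guarded (Or \<phi> \<psi>) = (guarded \<phi> \<and> guarded \<psi>)"
| "guarded (And \<phi> \<psi>) = (guarded \<phi> \<and> guarded \<psi>)"
| "guarded (Dia A \<phi>) = guarded \<phi>" | "guarded (Box A \<phi>) = guarded \<phi>"
| "guarded (MinF X \<phi>) = (\<not> unguarded X \<phi> \<and> guarded \<phi>)"
| "guarded (MaxF X \<phi>) = (\<not> unguarded X \<phi> \<and> guarded \<phi>)"
| "guarded (Var X) = True"

primrec sHML :: "'a fml \<Rightarrow> bool" where
  "sHML TT = True" | "sHML FF = True"
| "sHML (Or \<phi> \<psi>) = (sHML \<phi> \<and> sHML \<psi>)"
| "sHML (And \<phi> \<psi>) = (sHML \<phi> \<and> sHML \<psi>)"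
| "sHML (Dia A \<phi>) = False" | "sHML (Box A \<phi>) = sHML \<phi>"
| "sHML (MinF X \<phi>) = False" | "sHML (MaxF X \<phi>) = sHML \<phi>"
| "sHML (Var X) = True"

primrec cHML :: "'a fml \<Rightarrow> bool" where
  "cHML TT = True" | "cHML FF = True"
| "cHML (Or \<phi> \<psi>) = (cHML \<phi> \<and> cHML \<psi>)"
| "cHML (And \<phi> \<psi>) = (cHML \<phi> \<and> cHML \<psi>)"
| "cHML (Dia A \<phi>) = cHML \<phi>" | "cHML (Box A \<phi>) = False"
| "cHML (MinF X \<phi>) = cHML \<phi>" | "cHML (MaxF X \<phi>) = False"
| "cHML (Var X) = True"

datatype verdict = VEnd | VNo | VYes

datatype 'a mon =
    Verd verdict
  | Pre 'a "'a mon"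
  | Plus "'a mon" "'a mon"
  | Rec nat "'a mon"
  | MVar nat
  | MConj "'a mon" "'a mon"
  | MDisj "'a mon" "'a mon"

primrec msubst :: "'a mon \<Rightarrow> nat \<Rightarrow> 'a mon \<Rightarrow> 'a mon" where
  "msubst (Verd v) x n = Verd v"
| "msubst (Pre a m) x n = Pre a (msubst m x n)"
| "msubst (Plus m m') x n = Plus (msubst m x n) (msubst m' x n)"
| "msubst (Rec y m) x n = (if x = y then Rec y m else Rec y (msubst m x n))"
| "msubst (MVar y) x n = (if x = y then n else MVar y)"
| "msubst (MConj m m') x n = MConj (msubst m x n) (msubst m' x n)"
| "msubst (MDisj m m') x n = MDisj (msubst m x n) (msubst m' x n)"

(* transitions; None = tau, Some a = action a *)
inductive step :: "'a mon \<Rightarrow> 'a option \<Rightarrow> 'a mon \<Rightarrow> bool" where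
  sAct: "step (Pre a m) (Some a) m"
| sRec: "step (Rec x m) None (msubst m x (Rec x m))"
| sSelL: "step m \<mu> m' \<Longrightarrow> step (Plus m n) \<mu> m'"
| sSelR: "step m \<mu> m' \<Longrightarrow> step (Plus n m) \<mu> m'"
| sVerd: "step (Verd v) (Some a) (Verd v)"
| sParConj: "step m (Some a) m' \<Longrightarrow> step n (Some a) n' \<Longrightarrow> step (MConj m n) (Some a) (MConj m' n')"
| sParDisj: "step m (Some a) m' \<Longrightarrow> step n (Some a) n' \<Longrightarrow> step (MDisj m n) (Some a) (MDisj m' n')"
| sTauConjL: "step m None m' \<Longrightarrow> step (MConj m n) None (MConj m' n)"
| sTauConjR: "step m None m' \<Longrightarrow> step (MConj n m) None (MConj n m')"
| sTauDisjL: "step m None m' \<Longrightarrow> step (MDisj m n) None (MDisj m' n)"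
| sTauDisjR: "step m None m' \<Longrightarrow> step (MDisj n m) None (MDisj n m')"
| sEndConj: "step (MConj (Verd VEnd) (Verd VEnd)) None (Verd VEnd)"
| sEndDisj: "step (MDisj (Verd VEnd) (Verd VEnd)) None (Verd VEnd)"
| sYesConjL: "step (MConj (Verd VYes) m) None m"
| sYesConjR: "step (MConj m (Verd VYes)) None m"
| sNoConjL: "step (MConj (Verd VNo) m) None (Verd VNo)"
| sNoConjR: "step (MConj m (Verd VNo)) None (Verd VNo)"
| sNoDisjL: "step (MDisj (Verd VNo) m) None m"
| sNoDisjR: "step (MDisj m (Verd VNo)) None m"
| sYesDisjL: "step (MDisj (Verd VYes) m) None (Verd VYes)"
| sYesDisjR: "step (MDisj m (Verd VYes)) None (Verd VYes)"

definition tau_star :: "'a mon \<Rightarrow> 'a mon \<Rightarrow> bool" where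
  "tau_star = (\<lambda>m m'. step m None m')\<^sup>*\<^sup>*"

definition weak_step :: "'a mon \<Rightarrow> 'a \<Rightarrow> 'a mon \<Rightarrow> bool" where
  "weak_step m a m' \<longleftrightarrow> (\<exists>m1 m2. tau_star m m1 \<and> step m1 (Some a) m2 \<and> tau_star m2 m')"

fun weak_trace :: "'a mon \<Rightarrow> 'a list \<Rightarrow> 'a mon \<Rightarrow> bool" where
  "weak_trace m [] m' = tau_star m m'"
| "weak_trace m (a # s) m' = (\<exists>m''. weak_step m a m'' \<and> weak_trace m'' s m')"

definition rejects :: "'a mon \<Rightarrow> 'a ftrace \<Rightarrow> bool" where
  "rejects m g \<longleftrightarrow> (\<exists>s. is_prefix s g \<and> weak_trace m s (Verd VNo))"

definition accepts :: "'a mon \<Rightarrow> 'a ftrace \<Rightarrow> bool" where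
  "accepts m g \<longleftrightarrow> (\<exists>s. is_prefix s g \<and> weak_trace m s (Verd VYes))"

definition sound :: "'a mon \<Rightarrow> 'a fml \<Rightarrow> bool" where
  "sound m \<phi> \<longleftrightarrow> (\<forall>g. (rejects m g \<longrightarrow> g \<notin> semF \<phi>) \<and> (accepts m g \<longrightarrow> g \<in> semF \<phi>))"

definition violation_complete :: "'a mon \<Rightarrow> 'a fml \<Rightarrow> bool" where
  "violation_complete m \<phi> \<longleftrightarrow> (\<forall>g. g \<notin> semF \<phi> \<longrightarrow> rejects m g)"

definition satisfaction_complete :: "'a mon \<Rightarrow> 'a fml \<Rightarrow> bool" where
  "satisfaction_complete m \<phi> \<longleftrightarrow> (\<forall>g. g \<in> semF \<phi> \<longrightarrow> accepts m g)"

(* Synthesis.  A.n = sum over a\<in>A of a.n; summands with empty action set omitted.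
   The sum is built as a right-nested binary + over an enumeration of the action set
   (the order is immaterial). *)
definition enum_set :: "'a set \<Rightarrow> 'a list" where
  "enum_set A = (SOME xs. set xs = A \<and> distinct xs)"

fun sum_list_mon :: "'a mon list \<Rightarrow> 'a mon" where
  "sum_list_mon [] = Verd VEnd"   (* never used: Act = UNIV is nonempty *)
| "sum_list_mon [m] = m"
| "sum_list_mon (m # ms) = Plus m (sum_list_mon ms)"

definition guard_sum :: "'a set \<Rightarrow> 'a mon \<Rightarrow> 'a mon \<Rightarrow> 'a mon" where
  "guard_sum A n r = sum_list_mon (map (\<lambda>a. Pre a n) (enum_set A) @ map (\<lambda>a. Pre a r) (enum_set (- A)))"

primrec synth :: "('a::finite) fml \<Rightarrow> 'a mon" where
  "synth TT = Verd VYes"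
| "synth FF = Verd VNo"
| "synth (Var X) = MVar X"
| "synth (And \<phi> \<psi>) = MConj (synth \<phi>) (synth \<psi>)"
| "synth (Or \<phi> \<psi>) = MDisj (synth \<phi>) (synth \<psi>)"
| "synth (Box A \<phi>) = guard_sum A (synth \<phi>) (Verd VYes)"
| "synth (Dia A \<phi>) = guard_sum A (synth \<phi>) (Verd VNo)"
| "synth (MaxF X \<phi>) = Rec X (synth \<phi>)"
| "synth (MinF X \<phi>) = Rec X (synth \<phi>)"

end

theory Submission
  imports Defs
begin


primrec fsub :: "(nat \<Rightarrow> 'a fml) \<Rightarrow> 'a fml \<Rightarrow> 'a fml" where
  "fsub \<theta> TT = TT" | "fsub \<theta> FF = FF"
| "fsub \<theta> (Or a b) = Or (fsub \<theta> a) (fsub \<theta> b)"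
| "fsub \<theta> (And a b) = And (fsub \<theta> a) (fsub \<theta> b)"
| "fsub \<theta> (Dia A a) = Dia A (fsub \<theta> a)"
| "fsub \<theta> (Box A a) = Box A (fsub \<theta> a)"
| "fsub \<theta> (MinF X a) = MinF X (fsub (\<theta>(X := Var X)) a)"
| "fsub \<theta> (MaxF X a) = MaxF X (fsub (\<theta>(X := Var X)) a)"
| "fsub \<theta> (Var X) = \<theta> X"

lemma fv_fsub: "fv (fsub \<theta> \<phi>) \<subseteq> (\<Union>Y\<in>fv \<phi>. fv (\<theta> Y))"
  by (induction \<phi> arbitrary: \<theta>) (fastforce split: if_splits)+

lemma fsub_cong: "(\<forall>Y\<in>fv \<phi>. \<theta> Y = \<theta>' Y) \<Longrightarrow> fsub \<theta> \<phi> = fsub \<theta>' \<phi>"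
  by (induction \<phi> arbitrary: \<theta> \<theta>') auto

lemma fsub_id: "fsub Var \<phi> = \<phi>"
  by (induction \<phi>) (auto simp: fun_upd_idem)

lemma fsub_closed: "fv \<phi> = {} \<Longrightarrow> fsub \<theta> \<phi> = \<phi>"
  using fsub_cong[of \<phi> \<theta> Var] fsub_id by auto

lemma sem_cong: "(\<forall>Y\<in>fv \<phi>. \<sigma> Y = \<sigma>' Y) \<Longrightarrow> sem \<phi> \<sigma> = sem \<phi> \<sigma>'"
proof (induction \<phi> arbitrary: \<sigma> \<sigma>')
  case (MinF X \<phi>)
  have "\<And>S. sem \<phi> (\<sigma>(X:=S)) = sem \<phi> (\<sigma>'(X:=S))" using MinF by (intro MinF.IH) auto
  then show ?case by simp
next
  case (MaxF X \<phi>)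
  have "\<And>S. sem \<phi> (\<sigma>(X:=S)) = sem \<phi> (\<sigma>'(X:=S))" using MaxF by (intro MaxF.IH) auto
  then show ?case by simp
next
  case (Or a b)
  have "sem a \<sigma> = sem a \<sigma>'" by (rule Or.IH) (use Or.prems in auto)
  moreover have "sem b \<sigma> = sem b \<sigma>'" by (rule Or.IH) (use Or.prems in auto)
  ultimately show ?case by simp
next
  case (And a b)
  have "sem a \<sigma> = sem a \<sigma>'" by (rule And.IH) (use And.prems in auto)
  moreover have "sem b \<sigma> = sem b \<sigma>'" by (rule And.IH) (use And.prems in auto)
  ultimately show ?case by simp
next
  case (Dia A a)
  have "sem a \<sigma> = sem a \<sigma>'" by (rule Dia.IH) (use Dia.prems in auto)
  then show ?case by simp
next
  case (Box A a)
  have "sem a \<sigma> = sem a \<sigma>'" by (rule Box.IH) (use Box.prems in auto)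
  then show ?case by simp
qed auto

definition capfree :: "(nat \<Rightarrow> 'a fml) \<Rightarrow> 'a fml \<Rightarrow> bool" where
  "capfree \<theta> \<phi> \<longleftrightarrow> (\<forall>Y\<in>fv \<phi>. fv (\<theta> Y) = {} \<or> \<theta> Y = Var Y)"

lemma capfree_bind: "capfree \<theta> (MaxF X \<phi>) \<Longrightarrow> capfree (\<theta>(X := Var X)) \<phi>"
  "capfree \<theta> (MinF X \<phi>) \<Longrightarrow> capfree (\<theta>(X := Var X)) \<phi>"
  by (auto simp: capfree_def)

lemma sem_fsub: "capfree \<theta> \<phi> \<Longrightarrow> sem (fsub \<theta> \<phi>) \<sigma> = sem \<phi> (\<lambda>Y. sem (\<theta> Y) \<sigma>)"
proof (induction \<phi> arbitrary: \<theta> \<sigma>)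
  case (MinF X \<phi>)
  have "\<And>S. sem (fsub (\<theta>(X := Var X)) \<phi>) (\<sigma>(X:=S)) = sem \<phi> ((\<lambda>Y. sem (\<theta> Y) \<sigma>)(X:=S))"
  proof -
    fix S
    have "sem (fsub (\<theta>(X := Var X)) \<phi>) (\<sigma>(X:=S)) = sem \<phi> (\<lambda>Y. sem ((\<theta>(X := Var X)) Y) (\<sigma>(X:=S)))"
      using MinF capfree_bind by blast
    also have "\<dots> = sem \<phi> ((\<lambda>Y. sem (\<theta> Y) \<sigma>)(X:=S))"
    proof (rule sem_cong, intro ballI)
      fix Y assume Y: "Y \<in> fv \<phi>"
      show "sem ((\<theta>(X := Var X)) Y) (\<sigma>(X:=S)) = ((\<lambda>Y. sem (\<theta> Y) \<sigma>)(X:=S)) Y"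
      proof (cases "Y = X")
        case False
        then have "fv (\<theta> Y) = {} \<or> \<theta> Y = Var Y" using MinF.prems Y by (auto simp: capfree_def)
        then show ?thesis using False sem_cong[of "\<theta> Y" "\<sigma>(X:=S)" \<sigma>] by auto
      qed simp
    qed
    finally show "sem (fsub (\<theta>(X := Var X)) \<phi>) (\<sigma>(X:=S)) = sem \<phi> ((\<lambda>Y. sem (\<theta> Y) \<sigma>)(X:=S))" .
  qed
  then show ?case by simp
next
  case (MaxF X \<phi>)
  have "\<And>S. sem (fsub (\<theta>(X := Var X)) \<phi>) (\<sigma>(X:=S)) = sem \<phi> ((\<lambda>Y. sem (\<theta> Y) \<sigma>)(X:=S))"
  proof -
    fix S
    have "sem (fsub (\<theta>(X := Var X)) \<phi>) (\<sigma>(X:=S)) = sem \<phi> (\<lambda>Y. sem ((\<theta>(X := Var X)) Y) (\<sigma>(X:=S)))"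
      using MaxF capfree_bind by blast
    also have "\<dots> = sem \<phi> ((\<lambda>Y. sem (\<theta> Y) \<sigma>)(X:=S))"
    proof (rule sem_cong, intro ballI)
      fix Y assume Y: "Y \<in> fv \<phi>"
      show "sem ((\<theta>(X := Var X)) Y) (\<sigma>(X:=S)) = ((\<lambda>Y. sem (\<theta> Y) \<sigma>)(X:=S)) Y"
      proof (cases "Y = X")
        case False
        then have "fv (\<theta> Y) = {} \<or> \<theta> Y = Var Y" using MaxF.prems Y by (auto simp: capfree_def)
        then show ?thesis using False sem_cong[of "\<theta> Y" "\<sigma>(X:=S)" \<sigma>] by auto
      qed simp
    qed
    finally show "sem (fsub (\<theta>(X := Var X)) \<phi>) (\<sigma>(X:=S)) = sem \<phi> ((\<lambda>Y. sem (\<theta> Y) \<sigma>)(X:=S))" .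
  qed
  then show ?case by simp
qed (auto simp: capfree_def)

lemma sem_mono: "(\<And>Y. \<sigma> Y \<subseteq> \<sigma>' Y) \<Longrightarrow> sem \<phi> \<sigma> \<subseteq> sem \<phi> \<sigma>'"
proof (induction \<phi> arbitrary: \<sigma> \<sigma>')
  case (MinF X \<phi>)
  have h: "\<And>S. sem \<phi> (\<sigma>(X:=S)) \<subseteq> sem \<phi> (\<sigma>'(X:=S))" using MinF by (intro MinF.IH) auto
  have "{S. sem \<phi> (\<sigma>'(X:=S)) \<subseteq> S} \<subseteq> {S. sem \<phi> (\<sigma>(X:=S)) \<subseteq> S}"
  proof (rule subsetI, simp)
    fix S assume "sem \<phi> (\<sigma>'(X:=S)) \<subseteq> S"
    from order_trans[OF h[of S] this] show "sem \<phi> (\<sigma>(X:=S)) \<subseteq> S" .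
  qed
  then show ?case by (simp add: Inter_anti_mono)
next
  case (MaxF X \<phi>)
  have h: "\<And>S. sem \<phi> (\<sigma>(X:=S)) \<subseteq> sem \<phi> (\<sigma>'(X:=S))" using MaxF by (intro MaxF.IH) auto
  have "{S. S \<subseteq> sem \<phi> (\<sigma>(X:=S))} \<subseteq> {S. S \<subseteq> sem \<phi> (\<sigma>'(X:=S))}"
  proof (rule subsetI, simp)
    fix S assume "S \<subseteq> sem \<phi> (\<sigma>(X:=S))"
    from order_trans[OF this h[of S]] show "S \<subseteq> sem \<phi> (\<sigma>'(X:=S))" .
  qed
  then show ?case by (simp add: Union_mono)
next
  case (Dia A a)
  have "sem a \<sigma> \<subseteq> sem a \<sigma>'" by (rule Dia.IH) (rule Dia.prems)
  then show ?case by auto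
next
  case (Box A a)
  have "sem a \<sigma> \<subseteq> sem a \<sigma>'" by (rule Box.IH) (rule Box.prems)
  then show ?case by auto
next
  case (Or a b)
  have "sem a \<sigma> \<subseteq> sem a \<sigma>'" by (rule Or.IH) (rule Or.prems)
  moreover have "sem b \<sigma> \<subseteq> sem b \<sigma>'" by (rule Or.IH) (rule Or.prems)
  ultimately show ?case by auto
next
  case (And a b)
  have "sem a \<sigma> \<subseteq> sem a \<sigma>'" by (rule And.IH) (rule And.prems)
  moreover have "sem b \<sigma> \<subseteq> sem b \<sigma>'" by (rule And.IH) (rule And.prems)
  ultimately show ?case by auto
qed auto

lemma mono_sem: "mono (\<lambda>S. sem \<phi> (\<sigma>(X:=S)))"
  by (rule monoI, rule sem_mono) auto

lemma sem_Max_gfp: "sem (MaxF X \<phi>) \<sigma> = gfp (\<lambda>S. sem \<phi> (\<sigma>(X:=S)))"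
  by (simp add: gfp_def)
lemma sem_Min_lfp: "sem (MinF X \<phi>) \<sigma> = lfp (\<lambda>S. sem \<phi> (\<sigma>(X:=S)))"
  by (simp add: lfp_def)

lemma closed_unfold:
  assumes "fv (MaxF X \<phi>) = {}"
  shows "fv (fsub (Var(X := MaxF X \<phi>)) \<phi>) = {}"
proof -
  have "(\<Union>Y\<in>fv \<phi>. fv ((Var(X := MaxF X \<phi>)) Y)) = {}" using assms by auto
  then show ?thesis using fv_fsub[of "Var(X := MaxF X \<phi>)" \<phi>] by blast
qed
lemma closed_unfold':
  assumes "fv (MinF X \<phi>) = {}"
  shows "fv (fsub (Var(X := MinF X \<phi>)) \<phi>) = {}"
proof -
  have "(\<Union>Y\<in>fv \<phi>. fv ((Var(X := MinF X \<phi>)) Y)) = {}" using assms by auto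
  then show ?thesis using fv_fsub[of "Var(X := MinF X \<phi>)" \<phi>] by blast
qed

lemma unfold_Max:
  assumes "fv (MaxF X \<phi>) = {}"
  shows "sem (fsub (Var(X := MaxF X \<phi>)) \<phi>) \<sigma> = sem (MaxF X \<phi>) \<sigma>"
proof -
  have cf: "capfree (Var(X := MaxF X \<phi>)) \<phi>" using assms by (auto simp: capfree_def)
  have "(\<lambda>Y. sem ((Var(X := MaxF X \<phi>)) Y) \<sigma>) = \<sigma>(X := sem (MaxF X \<phi>) \<sigma>)"
  proof (rule ext)
    fix Y show "sem ((Var(X := MaxF X \<phi>)) Y) \<sigma> = (\<sigma>(X := sem (MaxF X \<phi>) \<sigma>)) Y"
      by (cases "Y = X") simp_all
  qed
  then have "sem (fsub (Var(X := MaxF X \<phi>)) \<phi>) \<sigma> = sem \<phi> (\<sigma>(X := sem (MaxF X \<phi>) \<sigma>))"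
    using sem_fsub[OF cf] by simp
  also have "\<dots> = sem (MaxF X \<phi>) \<sigma>"
    unfolding sem_Max_gfp by (rule gfp_unfold[OF mono_sem, symmetric])
  finally show ?thesis .
qed

lemma unfold_Min:
  assumes "fv (MinF X \<phi>) = {}"
  shows "sem (fsub (Var(X := MinF X \<phi>)) \<phi>) \<sigma> = sem (MinF X \<phi>) \<sigma>"
proof -
  have cf: "capfree (Var(X := MinF X \<phi>)) \<phi>" using assms by (auto simp: capfree_def)
  have "(\<lambda>Y. sem ((Var(X := MinF X \<phi>)) Y) \<sigma>) = \<sigma>(X := sem (MinF X \<phi>) \<sigma>)"
  proof (rule ext)
    fix Y show "sem ((Var(X := MinF X \<phi>)) Y) \<sigma> = (\<sigma>(X := sem (MinF X \<phi>) \<sigma>)) Y"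
      by (cases "Y = X") simp_all
  qed
  then have "sem (fsub (Var(X := MinF X \<phi>)) \<phi>) \<sigma> = sem \<phi> (\<sigma>(X := sem (MinF X \<phi>) \<sigma>))"
    using sem_fsub[OF cf] by simp
  also have "\<dots> = sem (MinF X \<phi>) \<sigma>"
    unfolding sem_Min_lfp by (rule lfp_unfold[OF mono_sem, symmetric])
  finally show ?thesis .
qed

lemma ug_fv: "unguarded X \<phi> \<Longrightarrow> X \<in> fv \<phi>"
  by (induction \<phi>) auto

lemma unguarded_fsub: "capfree \<theta> \<phi> \<Longrightarrow> unguarded X (fsub \<theta> \<phi>) \<Longrightarrow> \<exists>Y. unguarded Y \<phi> \<and> unguarded X (\<theta> Y)"
proof (induction \<phi> arbitrary: \<theta>)
  case (MinF Z \<phi>)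
  have c: "capfree (\<theta>(Z:=Var Z)) \<phi>" using MinF.prems(1) by (rule capfree_bind)
  have u: "unguarded X (fsub (\<theta>(Z:=Var Z)) \<phi>)" "X \<noteq> Z" using MinF.prems(2) by simp_all
  obtain Y where "unguarded Y \<phi>" "unguarded X ((\<theta>(Z := Var Z)) Y)" using MinF.IH[OF c u(1)] by blast
  then show ?case using u(2) by (auto split: if_splits)
next
  case (MaxF Z \<phi>)
  have c: "capfree (\<theta>(Z:=Var Z)) \<phi>" using MaxF.prems(1) by (rule capfree_bind)
  have u: "unguarded X (fsub (\<theta>(Z:=Var Z)) \<phi>)" "X \<noteq> Z" using MaxF.prems(2) by simp_all
  obtain Y where "unguarded Y \<phi>" "unguarded X ((\<theta>(Z := Var Z)) Y)" using MaxF.IH[OF c u(1)] by blast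
  then show ?case using u(2) by (auto split: if_splits)
next
  case (Or a b)
  have "capfree \<theta> a" "capfree \<theta> b" using Or.prems(1) by (auto simp: capfree_def)
  then show ?case using Or.IH Or.prems(2) by auto
next
  case (And a b)
  have "capfree \<theta> a" "capfree \<theta> b" using And.prems(1) by (auto simp: capfree_def)
  then show ?case using And.IH And.prems(2) by auto
qed auto

definition gsub :: "(nat \<Rightarrow> 'a fml) \<Rightarrow> 'a fml \<Rightarrow> bool" where
  "gsub \<theta> \<phi> \<longleftrightarrow> (\<forall>Y\<in>fv \<phi>. (fv (\<theta> Y) = {} \<and> guarded (\<theta> Y)) \<or> \<theta> Y = Var Y)"

lemma gsub_capfree: "gsub \<theta> \<phi> \<Longrightarrow> capfree \<theta> \<phi>"
  by (auto simp: gsub_def capfree_def)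

lemma guarded_fsub: "guarded \<phi> \<Longrightarrow> gsub \<theta> \<phi> \<Longrightarrow> guarded (fsub \<theta> \<phi>)"
proof (induction \<phi> arbitrary: \<theta>)
  case (MinF Z \<phi>)
  have g: "gsub (\<theta>(Z := Var Z)) \<phi>" using MinF.prems by (auto simp: gsub_def)
  have "\<not> unguarded Z (fsub (\<theta>(Z := Var Z)) \<phi>)"
  proof
    assume "unguarded Z (fsub (\<theta>(Z := Var Z)) \<phi>)"
    then obtain Y where Y: "unguarded Y \<phi>" "unguarded Z ((\<theta>(Z := Var Z)) Y)"
      using unguarded_fsub gsub_capfree[OF g] by blast
    show False
    proof (cases "Y = Z")
      case True then show ?thesis using Y MinF.prems by simp
    next
      case False
      then have "Y \<in> fv (MinF Z \<phi>)" using ug_fv[OF Y(1)] by simp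
      then have "fv (\<theta> Y) = {} \<or> \<theta> Y = Var Y" using MinF.prems by (auto simp: gsub_def)
      then show ?thesis using Y False ug_fv by fastforce
    qed
  qed
  then show ?case using MinF g by simp
next
  case (MaxF Z \<phi>)
  have g: "gsub (\<theta>(Z := Var Z)) \<phi>" using MaxF.prems by (auto simp: gsub_def)
  have "\<not> unguarded Z (fsub (\<theta>(Z := Var Z)) \<phi>)"
  proof
    assume "unguarded Z (fsub (\<theta>(Z := Var Z)) \<phi>)"
    then obtain Y where Y: "unguarded Y \<phi>" "unguarded Z ((\<theta>(Z := Var Z)) Y)"
      using unguarded_fsub gsub_capfree[OF g] by blast
    show False
    proof (cases "Y = Z")
      case True then show ?thesis using Y MaxF.prems by simp
    next
      case False
      then have "Y \<in> fv (MaxF Z \<phi>)" using ug_fv[OF Y(1)] by simp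
      then have "fv (\<theta> Y) = {} \<or> \<theta> Y = Var Y" using MaxF.prems by (auto simp: gsub_def)
      then show ?thesis using Y False ug_fv by fastforce
    qed
  qed
  then show ?case using MaxF g by simp
qed (auto simp: gsub_def)

lemma sHML_fsub: "sHML \<phi> \<Longrightarrow> (\<forall>Y\<in>fv \<phi>. sHML (\<theta> Y)) \<Longrightarrow> sHML (fsub \<theta> \<phi>)"
  by (induction \<phi> arbitrary: \<theta>) auto
lemma cHML_fsub: "cHML \<phi> \<Longrightarrow> (\<forall>Y\<in>fv \<phi>. cHML (\<theta> Y)) \<Longrightarrow> cHML (fsub \<theta> \<phi>)"
  by (induction \<phi> arbitrary: \<theta>) auto

primrec ugs :: "'a fml \<Rightarrow> nat" where
  "ugs TT = 1" | "ugs FF = 1" | "ugs (Or a b) = ugs a + ugs b + 1" | "ugs (And a b) = ugs a + ugs b + 1"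
| "ugs (Dia A a) = 1" | "ugs (Box A a) = 1" | "ugs (MinF X a) = ugs a + 1" | "ugs (MaxF X a) = ugs a + 1"
| "ugs (Var X) = 1"

lemma ugs_fsub: "(\<forall>Y. unguarded Y \<phi> \<longrightarrow> \<theta> Y = Var Y) \<Longrightarrow> ugs (fsub \<theta> \<phi>) = ugs \<phi>"
proof (induction \<phi> arbitrary: \<theta>)
  case (MinF X \<phi>)
  have "ugs (fsub (\<theta>(X := Var X)) \<phi>) = ugs \<phi>" using MinF by (intro MinF.IH) auto
  then show ?case by simp
next
  case (MaxF X \<phi>)
  have "ugs (fsub (\<theta>(X := Var X)) \<phi>) = ugs \<phi>" using MaxF by (intro MaxF.IH) auto
  then show ?case by simp
qed auto

lemma fsub_comp: "capfree \<theta> \<phi> \<Longrightarrow> fsub \<rho> (fsub \<theta> \<phi>) = fsub (\<lambda>Y. fsub \<rho> (\<theta> Y)) \<phi>"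
proof (induction \<phi> arbitrary: \<theta> \<rho>)
  case (MinF X \<phi>)
  have "fsub (\<rho>(X := Var X)) (fsub (\<theta>(X := Var X)) \<phi>) = fsub (\<lambda>Y. fsub (\<rho>(X := Var X)) ((\<theta>(X := Var X)) Y)) \<phi>"
    using MinF capfree_bind by blast
  also have "\<dots> = fsub ((\<lambda>Y. fsub \<rho> (\<theta> Y))(X := Var X)) \<phi>"
  proof (rule fsub_cong, intro ballI)
    fix Y assume Y: "Y \<in> fv \<phi>"
    show "fsub (\<rho>(X := Var X)) ((\<theta>(X := Var X)) Y) = ((\<lambda>Y. fsub \<rho> (\<theta> Y))(X := Var X)) Y"
    proof (cases "Y = X")
      case False
      then have "fv (\<theta> Y) = {} \<or> \<theta> Y = Var Y" using MinF.prems Y by (auto simp: capfree_def)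
      then show ?thesis using False by (auto simp: fsub_closed)
    qed simp
  qed
  finally show ?case by simp
next
  case (MaxF X \<phi>)
  have "fsub (\<rho>(X := Var X)) (fsub (\<theta>(X := Var X)) \<phi>) = fsub (\<lambda>Y. fsub (\<rho>(X := Var X)) ((\<theta>(X := Var X)) Y)) \<phi>"
    using MaxF capfree_bind by blast
  also have "\<dots> = fsub ((\<lambda>Y. fsub \<rho> (\<theta> Y))(X := Var X)) \<phi>"
  proof (rule fsub_cong, intro ballI)
    fix Y assume Y: "Y \<in> fv \<phi>"
    show "fsub (\<rho>(X := Var X)) ((\<theta>(X := Var X)) Y) = ((\<lambda>Y. fsub \<rho> (\<theta> Y))(X := Var X)) Y"
    proof (cases "Y = X")
      case False
      then have "fv (\<theta> Y) = {} \<or> \<theta> Y = Var Y" using MaxF.prems Y by (auto simp: capfree_def)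
      then show ?thesis using False by (auto simp: fsub_closed)
    qed simp
  qed
  finally show ?case by simp
qed (auto simp: capfree_def)



lemma case_nat_inj: "case_nat a f = case_nat b f' \<longleftrightarrow> a = b \<and> f = f'"
proof
  assume h: "case_nat a f = case_nat b f'"
  have "a = b" using fun_cong[OF h, of 0] by simp
  moreover have "f = f'"
  proof
    fix i show "f i = f' i" using fun_cong[OF h, of "Suc i"] by simp
  qed
  ultimately show "a = b \<and> f = f'" by simp
qed simp

lemma tcons_inj: "tcons a g = tcons b h \<longleftrightarrow> a = b \<and> g = h"
  by (cases g; cases h) (auto simp: case_nat_inj)

fun tapp :: "'a list \<Rightarrow> 'a ftrace \<Rightarrow> 'a ftrace" where
  "tapp [] g = g" | "tapp (a # s) g = tcons a (tapp s g)"

lemma tapp_Fin: "tapp s (FinT l) = FinT (s @ l)" by (induction s) auto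

lemma tapp_Inf: "tapp s (InfT h) = InfT (\<lambda>i. if i < length s then s ! i else h (i - length s))"
proof (induction s)
  case (Cons a s)
  show ?case using Cons by (auto simp: fun_eq_iff split: nat.split)
qed simp

lemma prefix_tapp: "is_prefix s g \<Longrightarrow> \<exists>g0. g = tapp s g0"
proof (cases g)
  case (FinT l)
  assume "is_prefix s g"
  then have "s = take (length s) l" using FinT by simp
  then have "tapp s (FinT (drop (length s) l)) = g" using FinT tapp_Fin
    by (metis append_take_drop_id)
  then show ?thesis by metis
next
  case (InfT f)
  assume "is_prefix s g"
  then have s: "s = map f [0..<length s]" using InfT by simp
  have "tapp s (InfT (\<lambda>i. f (i + length s))) = g"
  proof -
    have "\<And>i. i < length s \<Longrightarrow> s ! i = f i" using s by (metis add_0 diff_zero length_map nth_map nth_upt length_upt)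
    then show ?thesis using InfT by (auto simp: tapp_Inf fun_eq_iff)
  qed
  then show ?thesis by metis
qed

lemma prefix_cons: "is_prefix s g \<Longrightarrow> is_prefix (a # s) (tcons a g)"
  by (cases g) (auto simp: map_upt_Suc simp del: upt_Suc)

lemma prefix_Nil: "is_prefix [] g" by (cases g) auto

lemma prefix_comp:
  assumes "is_prefix s1 g" "is_prefix s2 g" "length s1 \<le> length s2"
  shows "\<exists>t. s2 = s1 @ t"
proof -
  have "take (length s1) s2 = s1"
  proof (cases g)
    case (FinT l)
    then show ?thesis using assms by (metis is_prefix.simps(1) min.absorb1 take_take)
  next
    case (InfT f)
    then have "s1 = map f [0..<length s1]" "s2 = map f [0..<length s2]" using assms by simp_all
    then show ?thesis using assms(3) by (metis add_0 take_map take_upt)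
  qed
  then show ?thesis by (metis append_take_drop_id)
qed

inductive_cases stepE_Pre: "step (Pre a m) \<mu> m'"
inductive_cases stepE_Plus: "step (Plus m n) \<mu> m'"
inductive_cases stepE_Rec: "step (Rec x m) \<mu> m'"
inductive_cases stepE_Verd: "step (Verd v) \<mu> m'"
inductive_cases stepE_MVar: "step (MVar x) \<mu> m'"
inductive_cases stepE_MConj: "step (MConj m n) \<mu> m'"
inductive_cases stepE_MDisj: "step (MDisj m n) \<mu> m'"

lemma step_Pre: "step (Pre a m) \<mu> m' \<longleftrightarrow> \<mu> = Some a \<and> m' = m"
  by (auto elim: stepE_Pre intro: step.intros)
lemma step_Plus: "step (Plus m n) \<mu> m' \<longleftrightarrow> step m \<mu> m' \<or> step n \<mu> m'"
  by (auto elim: stepE_Plus intro: step.intros)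
lemma step_Rec: "step (Rec x m) \<mu> m' \<longleftrightarrow> \<mu> = None \<and> m' = msubst m x (Rec x m)"
  by (auto elim: stepE_Rec intro: step.intros)
lemma step_Verd: "step (Verd v) \<mu> m' \<longleftrightarrow> (\<exists>a. \<mu> = Some a \<and> m' = Verd v)"
  by (auto elim: stepE_Verd intro: step.intros)

lemma step_sum: "ms \<noteq> [] \<Longrightarrow> step (sum_list_mon ms) \<mu> m' \<longleftrightarrow> (\<exists>m\<in>set ms. step m \<mu> m')"
  by (induction ms rule: sum_list_mon.induct) (auto simp: step_Plus)

lemma set_enum: "set (enum_set (A::'a::finite set)) = A"
  unfolding enum_set_def by (rule someI2_ex[OF finite_distinct_list]) auto

lemma guard_ne: "map (\<lambda>a. Pre a n) (enum_set (A::'a::finite set)) @ map (\<lambda>a. Pre a r) (enum_set (-A)) \<noteq> []"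
proof
  assume "map (\<lambda>a. Pre a n) (enum_set A) @ map (\<lambda>a. Pre a r) (enum_set (-A)) = []"
  then have "enum_set A = []" "enum_set (-A) = []" by simp_all
  then have "A = {}" "-A = {}" by (metis set_empty set_enum)+
  then show False by simp
qed

lemma step_guard: "step (guard_sum (A::'a::finite set) n r) \<mu> m' \<longleftrightarrow>
   (\<exists>a. \<mu> = Some a \<and> (a \<in> A \<and> m' = n \<or> a \<notin> A \<and> m' = r))"
  unfolding guard_sum_def by (auto simp: step_sum[OF guard_ne] set_enum step_Pre) (force simp: step_Pre)+

lemma sum_not_verd: "ms \<noteq> [] \<Longrightarrow> \<forall>m\<in>set ms. \<exists>a k. m = Pre a k \<Longrightarrow> sum_list_mon ms \<noteq> Verd v"
  by (induction ms rule: sum_list_mon.induct) auto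

lemma guard_not_verd: "guard_sum (A::'a::finite set) n r \<noteq> Verd v"
  unfolding guard_sum_def by (rule sum_not_verd[OF guard_ne]) auto

lemma synth_Verd: "synth \<psi> = Verd v \<longleftrightarrow> (\<psi> = TT \<and> v = VYes) \<or> (\<psi> = FF \<and> v = VNo)"
  by (cases \<psi>) (auto simp: guard_not_verd)

primrec msub :: "(nat \<Rightarrow> 'a mon) \<Rightarrow> 'a mon \<Rightarrow> 'a mon" where
  "msub \<rho> (Verd v) = Verd v"
| "msub \<rho> (Pre a m) = Pre a (msub \<rho> m)"
| "msub \<rho> (Plus m n) = Plus (msub \<rho> m) (msub \<rho> n)"
| "msub \<rho> (Rec y m) = Rec y (msub (\<rho>(y := MVar y)) m)"
| "msub \<rho> (MVar y) = \<rho> y"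
| "msub \<rho> (MConj m n) = MConj (msub \<rho> m) (msub \<rho> n)"
| "msub \<rho> (MDisj m n) = MDisj (msub \<rho> m) (msub \<rho> n)"

lemma msub_id: "msub MVar m = m"
  by (induction m) auto

lemma msubst_msub: "msubst m x n = msub (MVar(x := n)) m"
proof (induction m)
  case (Rec y m)
  show ?case
  proof (cases "x = y")
    case True
    then have "(MVar(x := n))(y := MVar y) = MVar" by auto
    then show ?thesis by (metis True msub_id msubst.simps(4) msub.simps(4))
  next
    case False
    then have "(MVar(x := n))(y := MVar y) = MVar(x := n)" by (auto simp: fun_eq_iff)
    then show ?thesis using False Rec by (metis msubst.simps(4) msub.simps(4))
  qed
qed auto

lemma msub_sum: "msub \<rho> (sum_list_mon ms) = sum_list_mon (map (msub \<rho>) ms)"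
  by (induction ms rule: sum_list_mon.induct) auto

lemma msub_guard: "msub \<rho> (guard_sum A n r) = guard_sum A (msub \<rho> n) (msub \<rho> r)"
  by (simp add: guard_sum_def msub_sum comp_def)

lemma synth_fsub: "synth (fsub \<theta> \<phi>) = msub (synth \<circ> \<theta>) (synth \<phi>)"
  by (induction \<phi> arbitrary: \<theta>) (auto simp: msub_guard fun_upd_comp)

lemma unfold_synth:
  assumes "synth M = Rec X (synth \<phi>)"
  shows "msubst (synth \<phi>) X (Rec X (synth \<phi>)) = synth (fsub (Var(X := M)) \<phi>)"
proof -
  have "synth \<circ> Var(X := M) = MVar(X := Rec X (synth \<phi>))" using assms by (auto simp: fun_eq_iff)
  then show ?thesis by (simp add: msubst_msub synth_fsub)
qed



fun der :: "'a option \<Rightarrow> 'a ftrace set \<Rightarrow> 'a ftrace set" where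
  "der None S = S" | "der (Some a) S = {g. tcons a g \<in> S}"

lemma step_sound:
  fixes \<psi> :: "('a::finite) fml"
  shows "step (synth \<psi>) \<mu> m' \<Longrightarrow> fv \<psi> = {} \<Longrightarrow>
    \<exists>\<psi>'. m' = synth \<psi>' \<and> fv \<psi>' = {} \<and> semF \<psi>' = der \<mu> (semF \<psi>)"
proof (induction \<psi> arbitrary: \<mu> m')
  case TT
  then show ?case by (auto simp: step_Verd semF_def intro!: exI[of _ TT])
next
  case FF
  then show ?case by (auto simp: step_Verd semF_def intro!: exI[of _ FF])
next
  case (Var X)
  then show ?case by simp
next
  case (And a b)
  have ca: "fv a = {}" and cb: "fv b = {}" using And.prems by auto
  have st: "step (MConj (synth a) (synth b)) \<mu> m'" using And.prems(1) by simp
  show ?case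
  proof (rule stepE_MConj[OF st])
    fix c ma mb assume h: "\<mu> = Some c" "m' = MConj ma mb" "step (synth a) (Some c) ma" "step (synth b) (Some c) mb"
    obtain a' where a': "ma = synth a'" "fv a' = {}" "semF a' = der \<mu> (semF a)"
      using And.IH(1)[OF _ ca] h by blast
    obtain b' where b': "mb = synth b'" "fv b' = {}" "semF b' = der \<mu> (semF b)"
      using And.IH(2)[OF _ cb] h by blast
    show ?thesis using h a' b' by (intro exI[of _ "And a' b'"]) (auto simp: semF_def)
  next
    fix ma assume h: "\<mu> = None" "m' = MConj ma (synth b)" "step (synth a) None ma"
    obtain a' where a': "ma = synth a'" "fv a' = {}" "semF a' = der \<mu> (semF a)"
      using And.IH(1)[OF _ ca] h by blast
    show ?thesis using h a' cb by (intro exI[of _ "And a' b"]) (auto simp: semF_def)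
  next
    fix mb assume h: "\<mu> = None" "m' = MConj (synth a) mb" "step (synth b) None mb"
    obtain b' where b': "mb = synth b'" "fv b' = {}" "semF b' = der \<mu> (semF b)"
      using And.IH(2)[OF _ cb] h by blast
    show ?thesis using h b' ca by (intro exI[of _ "And a b'"]) (auto simp: semF_def)
  next
    assume "\<mu> = None" "m' = Verd VEnd" "synth a = Verd VEnd" "synth b = Verd VEnd" then show ?thesis by (simp add: synth_Verd)
  next
    assume "synth a = Verd VYes" "\<mu> = None" "m' = synth b"
    then show ?thesis using cb by (intro exI[of _ b]) (auto simp: semF_def synth_Verd)
  next
    assume "synth b = Verd VYes" "\<mu> = None" "m' = synth a"
    then show ?thesis using ca by (intro exI[of _ a]) (auto simp: semF_def synth_Verd)
  next
    assume "synth a = Verd VNo" "\<mu> = None" "m' = Verd VNo"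
    then show ?thesis by (intro exI[of _ FF]) (auto simp: semF_def synth_Verd)
  next
    assume "synth b = Verd VNo" "\<mu> = None" "m' = Verd VNo"
    then show ?thesis by (intro exI[of _ FF]) (auto simp: semF_def synth_Verd)
  qed
next
  case (Or a b)
  have ca: "fv a = {}" and cb: "fv b = {}" using Or.prems by auto
  have st: "step (MDisj (synth a) (synth b)) \<mu> m'" using Or.prems(1) by simp
  show ?case
  proof (rule stepE_MDisj[OF st])
    fix c ma mb assume h: "\<mu> = Some c" "m' = MDisj ma mb" "step (synth a) (Some c) ma" "step (synth b) (Some c) mb"
    obtain a' where a': "ma = synth a'" "fv a' = {}" "semF a' = der \<mu> (semF a)"
      using Or.IH(1)[OF _ ca] h by blast
    obtain b' where b': "mb = synth b'" "fv b' = {}" "semF b' = der \<mu> (semF b)"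
      using Or.IH(2)[OF _ cb] h by blast
    show ?thesis using h a' b' by (intro exI[of _ "Or a' b'"]) (auto simp: semF_def)
  next
    fix ma assume h: "\<mu> = None" "m' = MDisj ma (synth b)" "step (synth a) None ma"
    obtain a' where a': "ma = synth a'" "fv a' = {}" "semF a' = der \<mu> (semF a)"
      using Or.IH(1)[OF _ ca] h by blast
    show ?thesis using h a' cb by (intro exI[of _ "Or a' b"]) (auto simp: semF_def)
  next
    fix mb assume h: "\<mu> = None" "m' = MDisj (synth a) mb" "step (synth b) None mb"
    obtain b' where b': "mb = synth b'" "fv b' = {}" "semF b' = der \<mu> (semF b)"
      using Or.IH(2)[OF _ cb] h by blast
    show ?thesis using h b' ca by (intro exI[of _ "Or a b'"]) (auto simp: semF_def)
  next
    assume "\<mu> = None" "m' = Verd VEnd" "synth a = Verd VEnd" "synth b = Verd VEnd" then show ?thesis by (simp add: synth_Verd)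
  next
    assume "synth a = Verd VNo" "\<mu> = None" "m' = synth b"
    then show ?thesis using cb by (intro exI[of _ b]) (auto simp: semF_def synth_Verd)
  next
    assume "synth b = Verd VNo" "\<mu> = None" "m' = synth a"
    then show ?thesis using ca by (intro exI[of _ a]) (auto simp: semF_def synth_Verd)
  next
    assume "synth a = Verd VYes" "\<mu> = None" "m' = Verd VYes"
    then show ?thesis by (intro exI[of _ TT]) (auto simp: semF_def synth_Verd)
  next
    assume "synth b = Verd VYes" "\<mu> = None" "m' = Verd VYes"
    then show ?thesis by (intro exI[of _ TT]) (auto simp: semF_def synth_Verd)
  qed
next
  case (Dia A a)
  have ca: "fv a = {}" using Dia.prems by auto
  from Dia.prems(1) obtain c where c: "\<mu> = Some c" "c \<in> A \<and> m' = synth a \<or> c \<notin> A \<and> m' = Verd VNo"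
    by (auto simp: step_guard)
  show ?case
  proof (cases "c \<in> A")
    case True
    then show ?thesis using c ca by (intro exI[of _ a]) (auto simp: semF_def tcons_inj)
  next
    case False
    then show ?thesis using c by (intro exI[of _ FF]) (auto simp: semF_def tcons_inj)
  qed
next
  case (Box A a)
  have ca: "fv a = {}" using Box.prems by auto
  from Box.prems(1) obtain c where c: "\<mu> = Some c" "c \<in> A \<and> m' = synth a \<or> c \<notin> A \<and> m' = Verd VYes"
    by (auto simp: step_guard)
  show ?case
  proof (cases "c \<in> A")
    case True
    then show ?thesis using c ca by (intro exI[of _ a]) (auto simp: semF_def tcons_inj)
  next
    case False
    then show ?thesis using c by (intro exI[of _ TT]) (auto simp: semF_def tcons_inj)
  qed
next
  case (MinF X a)
  from MinF.prems(1) have m': "\<mu> = None" "m' = msubst (synth a) X (Rec X (synth a))" by (auto simp: step_Rec)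
  then have "m' = synth (fsub (Var(X := MinF X a)) a)" using unfold_synth[of "MinF X a" X a] by simp
  then show ?case using m' MinF.prems(2) closed_unfold'[of X a] unfold_Min[of X a]
    by (intro exI[of _ "fsub (Var(X := MinF X a)) a"]) (simp add: semF_def)
next
  case (MaxF X a)
  from MaxF.prems(1) have m': "\<mu> = None" "m' = msubst (synth a) X (Rec X (synth a))" by (auto simp: step_Rec)
  then have "m' = synth (fsub (Var(X := MaxF X a)) a)" using unfold_synth[of "MaxF X a" X a] by simp
  then show ?case using m' MaxF.prems(2) closed_unfold[of X a] unfold_Max[of X a]
    by (intro exI[of _ "fsub (Var(X := MaxF X a)) a"]) (simp add: semF_def)
qed

lemma tau_sound:
  fixes \<psi> :: "('a::finite) fml"
  assumes "tau_star (synth \<psi>) m'" "fv \<psi> = {}"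
  shows "\<exists>\<psi>'. m' = synth \<psi>' \<and> fv \<psi>' = {} \<and> semF \<psi>' = semF \<psi>"
  using assms(1) unfolding tau_star_def
proof (induction rule: rtranclp_induct)
  case base
  then show ?case using assms(2) by blast
next
  case (step y z)
  then obtain \<psi>1 where "y = synth \<psi>1" "fv \<psi>1 = {}" "semF \<psi>1 = semF \<psi>" by blast
  then show ?case using step_sound[of \<psi>1 None z] step(2) by auto
qed

lemma wstep_sound:
  fixes \<psi> :: "('a::finite) fml"
  assumes "weak_step (synth \<psi>) a m'" "fv \<psi> = {}"
  shows "\<exists>\<psi>'. m' = synth \<psi>' \<and> fv \<psi>' = {} \<and> semF \<psi>' = {g. tcons a g \<in> semF \<psi>}"
proof -
  obtain m1 m2 where m: "tau_star (synth \<psi>) m1" "step m1 (Some a) m2" "tau_star m2 m'"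
    using assms(1) unfolding weak_step_def by blast
  obtain \<psi>1 where 1: "m1 = synth \<psi>1" "fv \<psi>1 = {}" "semF \<psi>1 = semF \<psi>" using tau_sound[OF m(1) assms(2)] by blast
  obtain \<psi>2 where 2: "m2 = synth \<psi>2" "fv \<psi>2 = {}" "semF \<psi>2 = der (Some a) (semF \<psi>1)"
    using step_sound[of \<psi>1 "Some a" m2] m(2) 1 by blast
  obtain \<psi>3 where 3: "m' = synth \<psi>3" "fv \<psi>3 = {}" "semF \<psi>3 = semF \<psi>2"
    using tau_sound[of \<psi>2 m'] m(3) 2 by blast
  show ?thesis using 1 2 3 by auto
qed

lemma trace_sound:
  fixes \<psi> :: "('a::finite) fml"
  shows "weak_trace (synth \<psi>) s m' \<Longrightarrow> fv \<psi> = {} \<Longrightarrow>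
     \<exists>\<psi>'. m' = synth \<psi>' \<and> fv \<psi>' = {} \<and> semF \<psi>' = {g. tapp s g \<in> semF \<psi>}"
proof (induction s arbitrary: \<psi>)
  case Nil
  then have "tau_star (synth \<psi>) m'" by simp
  then obtain \<psi>' where "m' = synth \<psi>'" "fv \<psi>' = {}" "semF \<psi>' = semF \<psi>" using tau_sound Nil.prems(2) by blast
  then show ?case by auto
next
  case (Cons a s)
  then obtain m'' where m: "weak_step (synth \<psi>) a m''" "weak_trace m'' s m'" by auto
  obtain \<psi>1 where 1: "m'' = synth \<psi>1" "fv \<psi>1 = {}" "semF \<psi>1 = {g. tcons a g \<in> semF \<psi>}"
    using wstep_sound[OF m(1) Cons.prems(2)] by blast
  obtain \<psi>' where "m' = synth \<psi>'" "fv \<psi>' = {}" "semF \<psi>' = {g. tapp s g \<in> semF \<psi>1}"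
    using Cons.IH[of \<psi>1] m(2) 1 by blast
  moreover have "{g. tapp s g \<in> semF \<psi>1} = {g. tapp (a # s) g \<in> semF \<psi>}" using 1 by simp
  ultimately show ?case by metis
qed

theorem soundness:
  fixes \<psi> :: "('a::finite) fml"
  assumes "fv \<psi> = {}"
  shows "sound (synth \<psi>) \<psi>"
  unfolding sound_def
proof (intro allI conjI impI)
  fix g
  assume "rejects (synth \<psi>) g"
  then obtain s where s: "is_prefix s g" "weak_trace (synth \<psi>) s (Verd VNo)" unfolding rejects_def by blast
  obtain \<psi>' where p: "Verd VNo = synth \<psi>'" "semF \<psi>' = {g. tapp s g \<in> semF \<psi>}"
    using trace_sound[OF s(2) assms] by blast
  then have "\<psi>' = FF" using synth_Verd[of \<psi>' VNo] by simp
  then have e: "{g. tapp s g \<in> semF \<psi>} = {}" using p by (simp add: semF_def)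
  obtain g0 where "g = tapp s g0" using prefix_tapp[OF s(1)] by blast
  moreover from e have "\<forall>h. tapp s h \<notin> semF \<psi>" by auto
  ultimately show "g \<notin> semF \<psi>" by simp
next
  fix g
  assume "accepts (synth \<psi>) g"
  then obtain s where s: "is_prefix s g" "weak_trace (synth \<psi>) s (Verd VYes)" unfolding accepts_def by blast
  obtain \<psi>' where p: "Verd VYes = synth \<psi>'" "semF \<psi>' = {g. tapp s g \<in> semF \<psi>}"
    using trace_sound[OF s(2) assms] by blast
  then have "\<psi>' = TT" using synth_Verd[of \<psi>' VYes] by simp
  then have e: "{g. tapp s g \<in> semF \<psi>} = UNIV" using p by (simp add: semF_def)
  obtain g0 where "g = tapp s g0" using prefix_tapp[OF s(1)] by blast
  moreover from e have "\<forall>h. tapp s h \<in> semF \<psi>" by auto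
  ultimately show "g \<in> semF \<psi>" by simp
qed



lemma tau_refl: "tau_star m m" unfolding tau_star_def by simp
lemma tau_trans: "tau_star m1 m2 \<Longrightarrow> tau_star m2 m3 \<Longrightarrow> tau_star m1 m3"
  unfolding tau_star_def by (rule rtranclp_trans)
lemma tau_one: "step m None m' \<Longrightarrow> tau_star m m'"
  unfolding tau_star_def by (rule r_into_rtranclp)

lemma tau_ctx:
  assumes "\<And>m m'. step m None m' \<Longrightarrow> step (C m) None (C m')"
  shows "tau_star m m' \<Longrightarrow> tau_star (C m) (C m')"
  unfolding tau_star_def
proof (induction rule: rtranclp_induct)
  case (step y z)
  then show ?case using assms by (meson rtranclp.rtrancl_into_rtrancl)
qed simp

lemma tau_conj: "tau_star m m' \<Longrightarrow> tau_star n n' \<Longrightarrow> tau_star (MConj m n) (MConj m' n')"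
proof -
  assume a: "tau_star m m'" "tau_star n n'"
  have "tau_star (MConj m n) (MConj m' n)"
    using tau_ctx[of "\<lambda>x. MConj x n"] a(1) by (meson step.sTauConjL)
  moreover have "tau_star (MConj m' n) (MConj m' n')"
    using tau_ctx[of "\<lambda>x. MConj m' x"] a(2) by (meson step.sTauConjR)
  ultimately show ?thesis by (rule tau_trans)
qed

lemma tau_disj: "tau_star m m' \<Longrightarrow> tau_star n n' \<Longrightarrow> tau_star (MDisj m n) (MDisj m' n')"
proof -
  assume a: "tau_star m m'" "tau_star n n'"
  have "tau_star (MDisj m n) (MDisj m' n)"
    using tau_ctx[of "\<lambda>x. MDisj x n"] a(1) by (meson step.sTauDisjL)
  moreover have "tau_star (MDisj m' n) (MDisj m' n')"
    using tau_ctx[of "\<lambda>x. MDisj m' x"] a(2) by (meson step.sTauDisjR)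
  ultimately show ?thesis by (rule tau_trans)
qed

lemma wstep_conj: "weak_step m a m' \<Longrightarrow> weak_step n a n' \<Longrightarrow> weak_step (MConj m n) a (MConj m' n')"
  unfolding weak_step_def by (meson step.sParConj tau_conj)
lemma wstep_disj: "weak_step m a m' \<Longrightarrow> weak_step n a n' \<Longrightarrow> weak_step (MDisj m n) a (MDisj m' n')"
  unfolding weak_step_def by (meson step.sParDisj tau_disj)

lemma wtrace_conj: "weak_trace m s m' \<Longrightarrow> weak_trace n s n' \<Longrightarrow> weak_trace (MConj m n) s (MConj m' n')"
  by (induction s arbitrary: m n) (auto intro: tau_conj wstep_conj)
lemma wtrace_disj: "weak_trace m s m' \<Longrightarrow> weak_trace n s n' \<Longrightarrow> weak_trace (MDisj m n) s (MDisj m' n')"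
  by (induction s arbitrary: m n) (auto intro: tau_disj wstep_disj)

lemma wtrace_tau: "weak_trace m s m1 \<Longrightarrow> tau_star m1 m2 \<Longrightarrow> weak_trace m s m2"
  by (induction s arbitrary: m) (auto intro: tau_trans)

lemma wstep_pre: "tau_star m m1 \<Longrightarrow> weak_step m1 a m' \<Longrightarrow> weak_step m a m'"
  unfolding weak_step_def by (meson tau_trans)

lemma wtrace_pre: "tau_star m m1 \<Longrightarrow> weak_trace m1 s m' \<Longrightarrow> weak_trace m s m'"
  by (cases s) (auto intro: tau_trans wstep_pre)

lemma wstep_of_step: "step m (Some a) m' \<Longrightarrow> weak_step m a m'"
  unfolding weak_step_def using tau_refl by blast

lemma wtrace_verd_self: "weak_trace (Verd v) t (Verd v)"
  by (induction t) (auto intro!: tau_refl wstep_of_step step.sVerd)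

lemma wtrace_verd: "weak_trace m s (Verd v) \<Longrightarrow> weak_trace m (s @ t) (Verd v)"
proof (induction s arbitrary: m)
  case Nil
  then show ?case using wtrace_pre[OF _ wtrace_verd_self] by simp
qed auto

lemma rej_conjL: "weak_trace m s (Verd VNo) \<Longrightarrow> weak_trace n s n' \<Longrightarrow> weak_trace (MConj m n) s (Verd VNo)"
  by (metis wtrace_conj wtrace_tau tau_one step.sNoConjL)
lemma rej_conjR: "weak_trace m s m' \<Longrightarrow> weak_trace n s (Verd VNo) \<Longrightarrow> weak_trace (MConj m n) s (Verd VNo)"
  by (metis wtrace_conj wtrace_tau tau_one step.sNoConjR)
lemma rej_disj: "weak_trace m s (Verd VNo) \<Longrightarrow> weak_trace n s (Verd VNo) \<Longrightarrow> weak_trace (MDisj m n) s (Verd VNo)"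
  by (metis wtrace_disj wtrace_tau tau_one step.sNoDisjL)
lemma acc_conj: "weak_trace m s (Verd VYes) \<Longrightarrow> weak_trace n s (Verd VYes) \<Longrightarrow> weak_trace (MConj m n) s (Verd VYes)"
  by (metis wtrace_conj wtrace_tau tau_one step.sYesConjL)
lemma acc_disjL: "weak_trace m s (Verd VYes) \<Longrightarrow> weak_trace n s n' \<Longrightarrow> weak_trace (MDisj m n) s (Verd VYes)"
  by (metis wtrace_disj wtrace_tau tau_one step.sYesDisjL)
lemma acc_disjR: "weak_trace m s m' \<Longrightarrow> weak_trace n s (Verd VYes) \<Longrightarrow> weak_trace (MDisj m n) s (Verd VYes)"
  by (metis wtrace_disj wtrace_tau tau_one step.sYesDisjR)

lemma rec_succ: "synth M = Rec X (synth \<phi>) \<Longrightarrow> step (synth M) None (synth (fsub (Var(X := M)) \<phi>))"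
  using unfold_synth[of M X \<phi>] by (simp add: step_Rec)

lemma total_step:
  fixes \<psi> :: "('a::finite) fml"
  shows "fv \<psi> = {} \<Longrightarrow> guarded \<psi> \<Longrightarrow> \<exists>\<psi>'. weak_step (synth \<psi>) a (synth \<psi>') \<and> fv \<psi>' = {} \<and> guarded \<psi>'"
proof (induction \<psi> rule: measure_induct_rule[of ugs])
  case (less \<psi>)
  show ?case
  proof (cases \<psi>)
    case TT
    then show ?thesis by (intro exI[of _ TT]) (auto intro!: wstep_of_step step.sVerd)
  next
    case FF
    then show ?thesis by (intro exI[of _ FF]) (auto intro!: wstep_of_step step.sVerd)
  next
    case (Var X)
    then show ?thesis using less by simp
  next
    case (And p q)
    obtain p' where p: "weak_step (synth p) a (synth p')" "fv p' = {}" "guarded p'"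
      using less.IH[of p] less.prems And by auto
    obtain q' where q: "weak_step (synth q) a (synth q')" "fv q' = {}" "guarded q'"
      using less.IH[of q] less.prems And by auto
    show ?thesis using p q And by (intro exI[of _ "And p' q'"]) (auto intro: wstep_conj)
  next
    case (Or p q)
    obtain p' where p: "weak_step (synth p) a (synth p')" "fv p' = {}" "guarded p'"
      using less.IH[of p] less.prems Or by auto
    obtain q' where q: "weak_step (synth q) a (synth q')" "fv q' = {}" "guarded q'"
      using less.IH[of q] less.prems Or by auto
    show ?thesis using p q Or by (intro exI[of _ "Or p' q'"]) (auto intro: wstep_disj)
  next
    case (Dia A p)
    show ?thesis
    proof (cases "a \<in> A")
      case True
      then have "weak_step (synth \<psi>) a (synth p)" using Dia by (auto intro!: wstep_of_step simp: step_guard)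
      then show ?thesis using less.prems Dia by auto
    next
      case False
      then have "weak_step (synth \<psi>) a (synth FF)" using Dia by (auto intro!: wstep_of_step simp: step_guard)
      then show ?thesis by (intro exI[of _ FF]) auto
    qed
  next
    case (Box A p)
    show ?thesis
    proof (cases "a \<in> A")
      case True
      then have "weak_step (synth \<psi>) a (synth p)" using Box by (auto intro!: wstep_of_step simp: step_guard)
      then show ?thesis using less.prems Box by auto
    next
      case False
      then have "weak_step (synth \<psi>) a (synth TT)" using Box by (auto intro!: wstep_of_step simp: step_guard)
      then show ?thesis by (intro exI[of _ TT]) auto
    qed
  next
    case (MinF X p)
    define p1 where "p1 = fsub (Var(X := \<psi>)) p"
    have st: "step (synth \<psi>) None (synth p1)" unfolding p1_def using MinF by (intro rec_succ) simp
    have c1: "fv p1 = {}" unfolding p1_def using closed_unfold'[of X p] less.prems MinF by simp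
    have gs: "gsub (Var(X := \<psi>)) p" using less.prems by (auto simp: gsub_def)
    have g1: "guarded p1" unfolding p1_def using MinF less.prems by (intro guarded_fsub gs) simp
    have "ugs p1 = ugs p" unfolding p1_def using MinF less.prems by (intro ugs_fsub) auto
    then have "ugs p1 < ugs \<psi>" using MinF by simp
    then obtain \<psi>' where "weak_step (synth p1) a (synth \<psi>')" "fv \<psi>' = {}" "guarded \<psi>'"
      using less.IH[of p1] c1 g1 by blast
    then show ?thesis using wstep_pre[OF tau_one[OF st]] by blast
  next
    case (MaxF X p)
    define p1 where "p1 = fsub (Var(X := \<psi>)) p"
    have st: "step (synth \<psi>) None (synth p1)" unfolding p1_def using MaxF by (intro rec_succ) simp
    have c1: "fv p1 = {}" unfolding p1_def using closed_unfold[of X p] less.prems MaxF by simp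
    have gs: "gsub (Var(X := \<psi>)) p" using less.prems by (auto simp: gsub_def)
    have g1: "guarded p1" unfolding p1_def using MaxF less.prems by (intro guarded_fsub gs) simp
    have "ugs p1 = ugs p" unfolding p1_def using MaxF less.prems by (intro ugs_fsub) auto
    then have "ugs p1 < ugs \<psi>" using MaxF by simp
    then obtain \<psi>' where "weak_step (synth p1) a (synth \<psi>')" "fv \<psi>' = {}" "guarded \<psi>'"
      using less.IH[of p1] c1 g1 by blast
    then show ?thesis using wstep_pre[OF tau_one[OF st]] by blast
  qed
qed

lemma total:
  fixes \<psi> :: "('a::finite) fml"
  shows "fv \<psi> = {} \<Longrightarrow> guarded \<psi> \<Longrightarrow> \<exists>m'. weak_trace (synth \<psi>) s m'"
proof (induction s arbitrary: \<psi>)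
  case Nil
  then show ?case using tau_refl by auto
next
  case (Cons a s)
  then obtain \<psi>' where p: "weak_step (synth \<psi>) a (synth \<psi>')" "fv \<psi>' = {}" "guarded \<psi>'"
    using total_step by blast
  then obtain m' where "weak_trace (synth \<psi>') s m'" using Cons.IH by blast
  then have "weak_trace (synth \<psi>) (a # s) m'" using p(1) by auto
  then show ?case by blast
qed



lemma env_comp:
  assumes "\<forall>Y\<in>fv \<phi> - {X}. fv (\<theta> Y) = {}"
  shows "fsub (Var(X := M)) (fsub (\<theta>(X := Var X)) \<phi>) = fsub (\<theta>(X := M)) \<phi>"
proof -
  have cf: "capfree (\<theta>(X := Var X)) \<phi>" using assms by (auto simp: capfree_def)
  show ?thesis unfolding fsub_comp[OF cf]
  proof (rule fsub_cong, intro ballI)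
    fix Y assume "Y \<in> fv \<phi>"
    then show "fsub (Var(X := M)) ((\<theta>(X := Var X)) Y) = (\<theta>(X := M)) Y"
      using assms by (cases "Y = X") (auto simp: fsub_closed)
  qed
qed

lemma closed_fsub: "\<forall>Y\<in>fv \<chi>. fv (\<theta> Y) = {} \<Longrightarrow> fv (fsub \<theta> \<chi>) = {}"
  using fv_fsub[of \<theta> \<chi>] by auto

lemma guarded_fsub': "guarded \<chi> \<Longrightarrow> \<forall>Y\<in>fv \<chi>. fv (\<theta> Y) = {} \<and> guarded (\<theta> Y) \<Longrightarrow> guarded (fsub \<theta> \<chi>)"
  by (rule guarded_fsub) (auto simp: gsub_def)

lemma rejects_Nil: "weak_trace m [] (Verd VNo) \<Longrightarrow> rejects m g"
  unfolding rejects_def using prefix_Nil by blast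

lemma compl_s:
  fixes \<chi> :: "('a::finite) fml"
  shows "sHML \<chi> \<Longrightarrow> guarded \<chi> \<Longrightarrow> \<forall>Y\<in>fv \<chi>. fv (\<theta> Y) = {} \<and> guarded (\<theta> Y) \<Longrightarrow>
    \<not> rejects (synth (fsub \<theta> \<chi>)) g \<Longrightarrow> g \<in> sem \<chi> (\<lambda>Y. {h. \<not> rejects (synth (\<theta> Y)) h})"
proof (induction \<chi> arbitrary: \<theta> g)
  case FF
  have "rejects (Verd VNo) g" using rejects_Nil tau_refl by (metis weak_trace.simps(1))
  then show ?case using FF.prems(4) by simp
next
  case (And a b)
  let ?\<sigma> = "\<lambda>Y. {h. \<not> rejects (synth (\<theta> Y)) h}"
  have ca: "fv (fsub \<theta> a) = {}" "guarded (fsub \<theta> a)" using And.prems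
    by (auto intro!: closed_fsub guarded_fsub')
  have cb: "fv (fsub \<theta> b) = {}" "guarded (fsub \<theta> b)" using And.prems
    by (auto intro!: closed_fsub guarded_fsub')
  have "\<not> rejects (synth (fsub \<theta> a)) g"
  proof
    assume "rejects (synth (fsub \<theta> a)) g"
    then obtain s where s: "is_prefix s g" "weak_trace (synth (fsub \<theta> a)) s (Verd VNo)" unfolding rejects_def by blast
    obtain n' where "weak_trace (synth (fsub \<theta> b)) s n'" using total cb by blast
    then have "weak_trace (synth (fsub \<theta> (And a b))) s (Verd VNo)" using s rej_conjL by simp
    then show False using And.prems(4) s(1) unfolding rejects_def by blast
  qed
  then have 1: "g \<in> sem a ?\<sigma>" using And by (intro And.IH(1)) auto
  have "\<not> rejects (synth (fsub \<theta> b)) g"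
  proof
    assume "rejects (synth (fsub \<theta> b)) g"
    then obtain s where s: "is_prefix s g" "weak_trace (synth (fsub \<theta> b)) s (Verd VNo)" unfolding rejects_def by blast
    obtain n' where "weak_trace (synth (fsub \<theta> a)) s n'" using total ca by blast
    then have "weak_trace (synth (fsub \<theta> (And a b))) s (Verd VNo)" using s rej_conjR by simp
    then show False using And.prems(4) s(1) unfolding rejects_def by blast
  qed
  then have 2: "g \<in> sem b ?\<sigma>" using And by (intro And.IH(2)) auto
  show ?case using 1 2 by simp
next
  case (Or a b)
  let ?\<sigma> = "\<lambda>Y. {h. \<not> rejects (synth (\<theta> Y)) h}"
  show ?case
  proof (rule ccontr)
    assume "g \<notin> sem (Or a b) ?\<sigma>"
    then have n: "g \<notin> sem a ?\<sigma>" "g \<notin> sem b ?\<sigma>" by auto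
    have "rejects (synth (fsub \<theta> a)) g"
      using n(1) Or.IH(1)[of \<theta> g] Or.prems by auto
    then obtain s1 where s1: "is_prefix s1 g" "weak_trace (synth (fsub \<theta> a)) s1 (Verd VNo)" unfolding rejects_def by blast
    have "rejects (synth (fsub \<theta> b)) g"
      using n(2) Or.IH(2)[of \<theta> g] Or.prems by auto
    then obtain s2 where s2: "is_prefix s2 g" "weak_trace (synth (fsub \<theta> b)) s2 (Verd VNo)" unfolding rejects_def by blast
    have "\<exists>s. is_prefix s g \<and> weak_trace (synth (fsub \<theta> a)) s (Verd VNo) \<and> weak_trace (synth (fsub \<theta> b)) s (Verd VNo)"
    proof (cases "length s1 \<le> length s2")
      case True
      then obtain t where "s2 = s1 @ t" using prefix_comp s1 s2 by blast
      then show ?thesis using s1 s2 wtrace_verd by blast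
    next
      case False
      then obtain t where "s1 = s2 @ t" using prefix_comp s1 s2 by (metis nat_le_linear)
      then show ?thesis using s1 s2 wtrace_verd by blast
    qed
    then obtain s where s: "is_prefix s g" "weak_trace (synth (fsub \<theta> (Or a b))) s (Verd VNo)"
      using rej_disj by fastforce
    then show False using Or.prems(4) unfolding rejects_def by blast
  qed
next
  case (Box A a)
  let ?\<sigma> = "\<lambda>Y. {h. \<not> rejects (synth (\<theta> Y)) h}"
  have "g' \<in> sem a ?\<sigma>" if c: "c \<in> A" "g = tcons c g'" for c g'
  proof -
    have "\<not> rejects (synth (fsub \<theta> a)) g'"
    proof
      assume "rejects (synth (fsub \<theta> a)) g'"
      then obtain s where s: "is_prefix s g'" "weak_trace (synth (fsub \<theta> a)) s (Verd VNo)" unfolding rejects_def by blast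
      have "weak_step (synth (fsub \<theta> (Box A a))) c (synth (fsub \<theta> a))"
        using c by (auto intro!: wstep_of_step simp: step_guard)
      then have "weak_trace (synth (fsub \<theta> (Box A a))) (c # s) (Verd VNo)" using s by auto
      moreover have "is_prefix (c # s) g" using prefix_cons[OF s(1)] c by simp
      ultimately show False using Box.prems(4) unfolding rejects_def by blast
    qed
    then show ?thesis using Box by (intro Box.IH) auto
  qed
  then show ?case by auto
next
  case (MaxF X a)
  let ?\<sigma> = "\<lambda>Y. {h. \<not> rejects (synth (\<theta> Y)) h}"
  define M where "M = fsub \<theta> (MaxF X a)"
  define S where "S = {h. \<not> rejects (synth M) h}"
  have cM: "fv M = {}" "guarded M" unfolding M_def using MaxF.prems
    by (auto intro!: closed_fsub guarded_fsub' simp del: fsub.simps)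
  have eq: "fsub (Var(X := M)) (fsub (\<theta>(X := Var X)) a) = fsub (\<theta>(X := M)) a"
    using MaxF.prems by (intro env_comp) auto
  have st: "step (synth M) None (synth (fsub (\<theta>(X := M)) a))"
    using rec_succ[of M X "fsub (\<theta>(X := Var X)) a"] eq unfolding M_def by simp
  have env: "(\<lambda>Y. {h. \<not> rejects (synth ((\<theta>(X := M)) Y)) h}) = ?\<sigma>(X := S)"
    unfolding S_def by (auto simp: fun_eq_iff)
  have "S \<subseteq> sem a (?\<sigma>(X := S))"
  proof
    fix h assume "h \<in> S"
    then have "\<not> rejects (synth (fsub (\<theta>(X := M)) a)) h"
      unfolding S_def rejects_def using wtrace_pre[OF tau_one[OF st]] by blast
    moreover have c1: "\<forall>Y\<in>fv a. fv ((\<theta>(X:=M)) Y) = {} \<and> guarded ((\<theta>(X:=M)) Y)" using MaxF.prems cM by auto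
    moreover have "sHML a" "guarded a" using MaxF.prems by auto
    ultimately have "h \<in> sem a (\<lambda>Y. {h. \<not> rejects (synth ((\<theta>(X := M)) Y)) h})"
      using MaxF.IH by blast
    then show "h \<in> sem a (?\<sigma>(X := S))" using env by simp
  qed
  moreover have "g \<in> S" unfolding S_def M_def using MaxF.prems by simp
  ultimately show ?case by auto
qed auto

lemma compl_c:
  fixes \<chi> :: "('a::finite) fml"
  shows "cHML \<chi> \<Longrightarrow> guarded \<chi> \<Longrightarrow> \<forall>Y\<in>fv \<chi>. fv (\<theta> Y) = {} \<and> guarded (\<theta> Y) \<Longrightarrow>
    g \<in> sem \<chi> (\<lambda>Y. {h. accepts (synth (\<theta> Y)) h}) \<Longrightarrow> accepts (synth (fsub \<theta> \<chi>)) g"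
proof (induction \<chi> arbitrary: \<theta> g)
  case TT
  then show ?case unfolding accepts_def using prefix_Nil tau_refl by fastforce
next
  case (And a b)
  have "accepts (synth (fsub \<theta> a)) g" using And by (intro And.IH(1)) auto
  then obtain s1 where s1: "is_prefix s1 g" "weak_trace (synth (fsub \<theta> a)) s1 (Verd VYes)" unfolding accepts_def by blast
  have "accepts (synth (fsub \<theta> b)) g" using And by (intro And.IH(2)) auto
  then obtain s2 where s2: "is_prefix s2 g" "weak_trace (synth (fsub \<theta> b)) s2 (Verd VYes)" unfolding accepts_def by blast
  have "\<exists>s. is_prefix s g \<and> weak_trace (synth (fsub \<theta> a)) s (Verd VYes) \<and> weak_trace (synth (fsub \<theta> b)) s (Verd VYes)"
  proof (cases "length s1 \<le> length s2")
    case True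
    then obtain t where "s2 = s1 @ t" using prefix_comp s1 s2 by blast
    then show ?thesis using s1 s2 wtrace_verd by blast
  next
    case False
    then obtain t where "s1 = s2 @ t" using prefix_comp s1 s2 by (metis nat_le_linear)
    then show ?thesis using s1 s2 wtrace_verd by blast
  qed
  then obtain s where s: "is_prefix s g" "weak_trace (synth (fsub \<theta> (And a b))) s (Verd VYes)"
    using acc_conj by fastforce
  then show ?case unfolding accepts_def by blast
next
  case (Or a b)
  have ca: "fv (fsub \<theta> a) = {}" "guarded (fsub \<theta> a)" using Or.prems
    by (auto intro!: closed_fsub guarded_fsub')
  have cb: "fv (fsub \<theta> b) = {}" "guarded (fsub \<theta> b)" using Or.prems
    by (auto intro!: closed_fsub guarded_fsub')
  consider "g \<in> sem a (\<lambda>Y. {h. accepts (synth (\<theta> Y)) h})" | "g \<in> sem b (\<lambda>Y. {h. accepts (synth (\<theta> Y)) h})"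
    using Or.prems(4) by auto
  then show ?case
  proof cases
    case 1
    have "accepts (synth (fsub \<theta> a)) g" using Or 1 by (intro Or.IH(1)) auto
    then obtain s where s: "is_prefix s g" "weak_trace (synth (fsub \<theta> a)) s (Verd VYes)" unfolding accepts_def by blast
    obtain n' where "weak_trace (synth (fsub \<theta> b)) s n'" using total cb by blast
    then have "weak_trace (synth (fsub \<theta> (Or a b))) s (Verd VYes)" using s acc_disjL by simp
    then show ?thesis using s(1) unfolding accepts_def by blast
  next
    case 2
    have "accepts (synth (fsub \<theta> b)) g" using Or 2 by (intro Or.IH(2)) auto
    then obtain s where s: "is_prefix s g" "weak_trace (synth (fsub \<theta> b)) s (Verd VYes)" unfolding accepts_def by blast
    obtain n' where "weak_trace (synth (fsub \<theta> a)) s n'" using total ca by blast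
    then have "weak_trace (synth (fsub \<theta> (Or a b))) s (Verd VYes)" using s acc_disjR by simp
    then show ?thesis using s(1) unfolding accepts_def by blast
  qed
next
  case (Dia A a)
  then obtain c g' where c: "c \<in> A" "g = tcons c g'" "g' \<in> sem a (\<lambda>Y. {h. accepts (synth (\<theta> Y)) h})" by auto
  have "accepts (synth (fsub \<theta> a)) g'" using Dia c by (intro Dia.IH) auto
  then obtain s where s: "is_prefix s g'" "weak_trace (synth (fsub \<theta> a)) s (Verd VYes)" unfolding accepts_def by blast
  have "weak_step (synth (fsub \<theta> (Dia A a))) c (synth (fsub \<theta> a))"
    using c by (auto intro!: wstep_of_step simp: step_guard)
  then have "weak_trace (synth (fsub \<theta> (Dia A a))) (c # s) (Verd VYes)" using s by auto
  moreover have "is_prefix (c # s) g" using prefix_cons[OF s(1)] c by simp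
  ultimately show ?case unfolding accepts_def by blast
next
  case (MinF X a)
  let ?\<sigma> = "\<lambda>Y. {h. accepts (synth (\<theta> Y)) h}"
  define M where "M = fsub \<theta> (MinF X a)"
  define S where "S = {h. accepts (synth M) h}"
  have cM: "fv M = {}" "guarded M" unfolding M_def using MinF.prems
    by (auto intro!: closed_fsub guarded_fsub' simp del: fsub.simps)
  have eq: "fsub (Var(X := M)) (fsub (\<theta>(X := Var X)) a) = fsub (\<theta>(X := M)) a"
    using MinF.prems by (intro env_comp) auto
  have st: "step (synth M) None (synth (fsub (\<theta>(X := M)) a))"
    using rec_succ[of M X "fsub (\<theta>(X := Var X)) a"] eq unfolding M_def by simp
  have env: "(\<lambda>Y. {h. accepts (synth ((\<theta>(X := M)) Y)) h}) = ?\<sigma>(X := S)"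
    unfolding S_def by (auto simp: fun_eq_iff)
  have "sem a (?\<sigma>(X := S)) \<subseteq> S"
  proof
    fix h assume "h \<in> sem a (?\<sigma>(X := S))"
    then have "h \<in> sem a (\<lambda>Y. {h. accepts (synth ((\<theta>(X := M)) Y)) h})" using env by simp
    moreover have c1: "\<forall>Y\<in>fv a. fv ((\<theta>(X:=M)) Y) = {} \<and> guarded ((\<theta>(X:=M)) Y)" using MinF.prems cM by auto
    moreover have "cHML a" "guarded a" using MinF.prems by auto
    ultimately have "accepts (synth (fsub (\<theta>(X := M)) a)) h"
      using MinF.IH by blast
    then show "h \<in> S"
      unfolding S_def accepts_def using wtrace_pre[OF tau_one[OF st]] by blast
  qed
  then have "g \<in> S" using MinF.prems(4) by auto
  then show ?case unfolding S_def M_def by simp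
qed auto

theorem mainTheorem10:
  fixes \<phi> :: "('a::finite) fml"
  shows "(closed \<phi> \<and> guarded \<phi> \<and> sHML \<phi> \<longrightarrow>
            sound (synth \<phi>) \<phi> \<and> violation_complete (synth \<phi>) \<phi>) \<and>
         (closed \<phi> \<and> guarded \<phi> \<and> cHML \<phi> \<longrightarrow>
            sound (synth \<phi>) \<phi> \<and> satisfaction_complete (synth \<phi>) \<phi>)"
proof (intro conjI impI)
  assume h: "closed \<phi> \<and> guarded \<phi> \<and> sHML \<phi>"
  then have c: "fv \<phi> = {}" by (simp add: closed_def)
  show "sound (synth \<phi>) \<phi>" using soundness[OF c] .
  show "violation_complete (synth \<phi>) \<phi>"
    unfolding violation_complete_def
  proof (intro allI impI)
    fix g assume g: "g \<notin> semF \<phi>"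
    have e: "sem \<phi> (\<lambda>Y. {h. \<not> rejects (synth (Var Y)) h}) = semF \<phi>"
      unfolding semF_def using c by (intro sem_cong) simp
    show "rejects (synth \<phi>) g"
      using compl_s[of \<phi> Var g] h c e g fsub_id[of \<phi>] by auto
  qed
next
  assume h: "closed \<phi> \<and> guarded \<phi> \<and> cHML \<phi>"
  then have c: "fv \<phi> = {}" by (simp add: closed_def)
  show "sound (synth \<phi>) \<phi>" using soundness[OF c] .
  show "satisfaction_complete (synth \<phi>) \<phi>"
    unfolding satisfaction_complete_def
  proof (intro allI impI)
    fix g assume g: "g \<in> semF \<phi>"
    have e: "sem \<phi> (\<lambda>Y. {h. accepts (synth (Var Y)) h}) = semF \<phi>"
      unfolding semF_def using c by (intro sem_cong) simp
    show "accepts (synth \<phi>) g"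
      using compl_c[of \<phi> Var g] h c e g fsub_id[of \<phi>] by auto
  qed
qed

end
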